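(* Let $X$ be a decomposable continuum and $x\in X$ a null-aposyndetic point such that $X$ is not coastal at $x$. Then for every thick subcontinuum $T\subset X$, the set $\overline{X-T}$ is a thick subcontinuum of $X$.
   Context: A continuum is a nondegenerate compact connected Hausdorff space; it is decomposable if it is the union of two proper subcontinua. A subcontinuum is thick if it is proper and has nonempty interior. A point $x$ is null-aposyndetic if no proper subcontinuum of $X$ contains $x$ in its interior. $\kappa(x;p)$ is the union of all subcontinua $M\neq X$ with $x\in M$, $p\notin M$; $X$ is coastal at $x$ if $\kappa(x;p)$ is dense for some $p\neq x$. *)

theory Defs
  imports "HOL-Analysis.Analysis"
begin

definition continuum :: "'a topology \<Rightarrow> bool" where
  "continuum X \<longleftrightarrow> compact_space X \<and> connected_space X \<and> Hausdorff_space X \<and>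
     (\<exists>a b. a \<in> topspace X \<and> b \<in> topspace X \<and> a \<noteq> b)"

definition subcontinuum :: "'a topology \<Rightarrow> 'a set \<Rightarrow> bool" where
  "subcontinuum X M \<longleftrightarrow> M \<subseteq> topspace X \<and> M \<noteq> {} \<and> compactin X M \<and> connectedin X M"

definition decomposable :: "'a topology \<Rightarrow> bool" where
  "decomposable X \<longleftrightarrow> (\<exists>A B. subcontinuum X A \<and> subcontinuum X B \<and>
     A \<noteq> topspace X \<and> B \<noteq> topspace X \<and> A \<union> B = topspace X)"

definition thick :: "'a topology \<Rightarrow> 'a set \<Rightarrow> bool" where
  "thick X T \<longleftrightarrow> subcontinuum X T \<and> T \<noteq> topspace X \<and> X interior_of T \<noteq> {}"

definition null_aposyndetic :: "'a topology \<Rightarrow> 'a \<Rightarrow> bool" where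
  "null_aposyndetic X x \<longleftrightarrow> x \<in> topspace X \<and>
     \<not> (\<exists>M. subcontinuum X M \<and> M \<noteq> topspace X \<and> x \<in> X interior_of M)"

definition kappa :: "'a topology \<Rightarrow> 'a \<Rightarrow> 'a \<Rightarrow> 'a set" where
  "kappa X x p = \<Union>{M. subcontinuum X M \<and> M \<noteq> topspace X \<and> x \<in> M \<and> p \<notin> M}"

definition coastal_at :: "'a topology \<Rightarrow> 'a \<Rightarrow> bool" where
  "coastal_at X x \<longleftrightarrow> (\<exists>p \<in> topspace X. p \<noteq> x \<and> X closure_of (kappa X x p) = topspace X)"

end

theory Submission
  imports Defs
begin

lemma conn_union_part:
  assumes cs: "connected_space X" and cA: "closedin X A" and cB: "closedin X B"
    and AB: "A \<inter> B = {}" and cov: "topspace X = T \<union> A \<union> B"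
    and cT: "connectedin X T" and Tne: "T \<noteq> {}" and clT: "closedin X T"
  shows "connectedin X (T \<union> A)"
proof -
  let ?M = "T \<union> A"
  have Msub: "?M \<subseteq> topspace X" using cov by blast
  show ?thesis unfolding connectedin_closedin
  proof (intro conjI Msub notI)
    assume "\<exists>E1 E2. closedin X E1 \<and> closedin X E2 \<and> ?M \<subseteq> E1 \<union> E2 \<and>
       E1 \<inter> E2 \<inter> ?M = {} \<and> E1 \<inter> ?M \<noteq> {} \<and> E2 \<inter> ?M \<noteq> {}"
    then obtain F1 F2 where F: "closedin X F1" "closedin X F2" "?M \<subseteq> F1 \<union> F2"
      "F1 \<inter> F2 \<inter> ?M = {}" "F1 \<inter> ?M \<noteq> {}" "F2 \<inter> ?M \<noteq> {}" by blast
    have gen: "False" if G: "closedin X G1" "closedin X G2" "?M \<subseteq> G1 \<union> G2"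
      "G1 \<inter> G2 \<inter> ?M = {}" "G2 \<inter> ?M \<noteq> {}" "T \<subseteq> G1" for G1 G2
    proof -
      have c1: "closedin X ((G1 \<inter> ?M) \<union> B)"
        using G cA cB clT by (intro closedin_Un closedin_Int) auto
      have c2: "closedin X (G2 \<inter> ?M)"
        using G cA clT by (intro closedin_Int closedin_Un) auto
      have "connectedin X (topspace X)" using cs connectedin_topspace by blast
      then show False unfolding connectedin_closedin
        apply (elim conjE notE)
        apply (rule exI[of _ "(G1 \<inter> ?M) \<union> B"], rule exI[of _ "G2 \<inter> ?M"])
        using c1 c2 G cov AB Tne by blast
    qed
    have "T \<subseteq> F1 \<or> T \<subseteq> F2"
    proof (rule ccontr)
      assume "\<not> (T \<subseteq> F1 \<or> T \<subseteq> F2)"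
      then show False using cT F unfolding connectedin_closedin by blast
    qed
    then show False
    proof
      assume "T \<subseteq> F1" then show False using gen[of F1 F2] F by blast
    next
      assume "T \<subseteq> F2" then show False using gen[of F2 F1] F by blast
    qed
  qed
qed

lemma key:
  assumes cX: "continuum X" and cA: "closedin X A" and cB: "closedin X B"
    and AB: "A \<inter> B = {}" and cov: "topspace X = T \<union> A \<union> B"
    and cT: "connectedin X T" and Tne: "T \<noteq> {}" and clT: "closedin X T"
    and b: "b \<in> B" "b \<notin> T" and x: "x \<in> topspace X" "x \<notin> B"
  shows "subcontinuum X (T \<union> A) \<and> T \<union> A \<noteq> topspace X \<and> x \<in> X interior_of (T \<union> A)"
proof -
  have cs: "connected_space X" and cp: "compact_space X" using cX unfolding continuum_def by auto
  have "connectedin X (T \<union> A)" using conn_union_part[OF cs cA cB AB cov cT Tne clT] .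
  moreover have "compactin X (T \<union> A)" using cp clT cA closedin_compact_space closedin_Un by blast
  moreover have "b \<notin> T \<union> A" "b \<in> topspace X" using b AB cov by auto
  moreover have "topspace X - B \<subseteq> X interior_of (T \<union> A)"
  proof (rule interior_of_maximal)
    show "openin X (topspace X - B)" using cB by (simp add: openin_diff)
    show "topspace X - B \<subseteq> T \<union> A" using cov by blast
  qed
  ultimately show ?thesis unfolding subcontinuum_def using cov x Tne by blast
qed

theorem mainTheorem20:
  fixes X :: "'a topology" and x :: 'a and T :: "'a set"
  assumes "continuum X"
    and "decomposable X"
    and "x \<in> topspace X"
    and "null_aposyndetic X x"
    and "\<not> coastal_at X x"
    and "thick X T"
  shows "thick X (X closure_of (topspace X - T))"
proof -
  let ?C = "X closure_of (topspace X - T)"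
  have cX: "continuum X" by fact
  have cp: "compact_space X" and hs: "Hausdorff_space X" using assms(1) unfolding continuum_def by auto
  have sT: "subcontinuum X T" and Tne: "T \<noteq> topspace X" and iT: "X interior_of T \<noteq> {}"
    using assms(6) unfolding thick_def by auto
  have Tsub: "T \<subseteq> topspace X" and Tn: "T \<noteq> {}" and cT: "connectedin X T" and kT: "compactin X T"
    using sT unfolding subcontinuum_def by auto
  have clT: "closedin X T" using compactin_imp_closedin[OF hs kT] .
  have oD: "openin X (topspace X - T)" using clT by blast
  have Dne: "topspace X - T \<noteq> {}" using Tsub Tne by blast
  have DC: "topspace X - T \<subseteq> ?C" by (simp add: closure_of_subset)
  have Csub: "?C \<subseteq> topspace X" by (rule closure_of_subset_topspace)
  have clC: "closedin X ?C" by simp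
  have conn: "connectedin X ?C"
  proof (rule ccontr)
    assume "\<not> connectedin X ?C"
    then obtain E1 E2 where E: "closedin X E1" "closedin X E2" "?C \<subseteq> E1 \<union> E2"
      "E1 \<inter> E2 \<inter> ?C = {}" "E1 \<inter> ?C \<noteq> {}" "E2 \<inter> ?C \<noteq> {}"
      using Csub unfolding connectedin_closedin by blast
    define A where "A = E1 \<inter> ?C"
    define B where "B = E2 \<inter> ?C"
    have cA: "closedin X A" unfolding A_def using E(1) clC by (rule closedin_Int)
    have cB: "closedin X B" unfolding B_def using E(2) clC by (rule closedin_Int)
    have AB: "A \<inter> B = {}" "B \<inter> A = {}" unfolding A_def B_def using E(4) by blast+
    have ABeq: "A \<union> B = ?C" unfolding A_def B_def using E(3) by blast
    have cov: "topspace X = T \<union> A \<union> B" "topspace X = T \<union> B \<union> A"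
      using ABeq DC Csub Tsub by blast+
    have nsub: "\<not> P \<subseteq> T" if "P \<noteq> {}" "P \<subseteq> ?C" "closedin X Q"
      "P \<inter> Q = {}" "?C \<subseteq> P \<union> Q" for P Q
    proof
      assume PT: "P \<subseteq> T"
      have "topspace X - T \<subseteq> Q" using DC that(5) PT by blast
      then have "?C \<subseteq> Q" using closure_of_minimal that(3) by blast
      then show False using that(1,2,4) by blast
    qed
    have Ane: "A \<noteq> {}" using E(5) unfolding A_def by blast
    have Bne: "B \<noteq> {}" using E(6) unfolding B_def by blast
    have "\<not> B \<subseteq> T" by (rule nsub[OF Bne _ cA AB(2)]) (use ABeq in blast)+
    then obtain b where b: "b \<in> B" "b \<notin> T" by blast
    have "\<not> A \<subseteq> T" by (rule nsub[OF Ane _ cB AB(1)]) (use ABeq in blast)+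
    then obtain a where a: "a \<in> A" "a \<notin> T" by blast
    have "x \<notin> B \<or> x \<notin> A" using AB by blast
    then show False
    proof
      assume "x \<notin> B"
      then show False using key[OF cX cA cB AB(1) cov(1) cT Tn clT b assms(3)] assms(4)
        unfolding null_aposyndetic_def by blast
    next
      assume "x \<notin> A"
      then show False using key[OF cX cB cA AB(2) cov(2) cT Tn clT a assms(3)] assms(4)
        unfolding null_aposyndetic_def by blast
    qed
  qed
  have Cne: "?C \<noteq> {}" using DC Dne by blast
  have kC: "compactin X ?C" using cp clC closedin_compact_space by blast
  have Cprop: "?C \<noteq> topspace X"
    using iT interior_of_subset_topspace[of X T] unfolding closure_of_complement by blast
  have "topspace X - T \<subseteq> X interior_of ?C" using DC oD interior_of_maximal by blast
  then have "X interior_of ?C \<noteq> {}" using Dne by blast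
  then show ?thesis unfolding thick_def subcontinuum_def
    using Csub Cne kC conn Cprop by blast
qed

end
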